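(* Let $g:\mathbb{R}^n\to\mathbb{R}$ be a multilinear polynomial of degree at most $d$, $g(x)=\sum_{|S|\leq d}\hat g(S)x_S$, and suppose there exists $S\subseteq N$ with $|S|=d$ and $|\hat g(S)|\geq 1$. Then for $x$ chosen uniformly at random from $[-1,1]^n$ and any $\epsilon>0$, $$\Pr_{x}\big[\,|g(x)|\leq\epsilon\,\big]\leq 2^d\sqrt{\epsilon}.$$
   Context: $N=\{1,\ldots,n\}$; for $S\subseteq N$ and $x\in\mathbb{R}^n$, $x_S=\prod_{i\in S}x_i$. A multilinear polynomial is written uniquely as $g(x)=\sum_{S\subseteq N}\hat g(S)x_S$. *)

theory Defs
  imports "HOL-Probability.Probability"
begin

definition mlpoly :: "nat \<Rightarrow> (nat set \<Rightarrow> real) \<Rightarrow> (nat \<Rightarrow> real) \<Rightarrow> real" where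
  "mlpoly n c x = (\<Sum>S\<in>Pow {1..n}. c S * (\<Prod>i\<in>S. x i))"

definition cube_measure :: "nat \<Rightarrow> (nat \<Rightarrow> real) measure" where
  "cube_measure n = PiM {1..n} (\<lambda>_. uniform_measure lborel {-1..1::real})"

end

theory Submission imports Defs begin

abbreviation U :: "real measure" where "U \<equiv> uniform_measure lborel {-1..1::real}"

definition pl :: "nat set \<Rightarrow> (nat set \<Rightarrow> real) \<Rightarrow> (nat \<Rightarrow> real) \<Rightarrow> real" where
  "pl I c x = (\<Sum>S\<in>Pow I. c S * (\<Prod>i\<in>S. x i))"

lemma U_prob: "prob_space U"
  by (rule prob_space_uniform_measure) auto

lemma PiU_prob: "prob_space (PiM I (\<lambda>_. U))"
  by (rule prob_space_PiM) (rule U_prob)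

lemma U_pps: "product_prob_space (\<lambda>_. U)"
  unfolding product_prob_space_def product_prob_space_axioms_def product_sigma_finite_def
  using U_prob prob_space_imp_sigma_finite by blast

lemma space_U[simp]: "space U = UNIV" by simp
lemma sets_U[simp]: "sets U = sets borel" by simp

lemma pl_meas[measurable]: "finite I \<Longrightarrow> pl I c \<in> borel_measurable (PiM I (\<lambda>_. U))"
  unfolding pl_def by measurable auto

lemma pl_insert:
  assumes "finite I" "j \<notin> I"
  shows "pl (insert j I) c (x(j:=y)) = y * pl I (\<lambda>S. c (insert j S)) x + pl I c x"
proof -
  have fin: "finite (Pow I)" using assms by simp
  have disj: "Pow I \<inter> insert j ` Pow I = {}" using assms by auto
  have inj: "inj_on (insert j) (Pow I)" unfolding inj_on_def using assms by (metis PowD Diff_insert_absorb subsetD)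
  have A: "(\<Sum>S\<in>Pow I. c S * (\<Prod>i\<in>S. (x(j:=y)) i)) = pl I c x"
    unfolding pl_def
    by (rule sum.cong[OF refl], rule arg_cong[where f="\<lambda>t. _ * t"], rule prod.cong) (use assms in auto)
  have B: "(\<Sum>S\<in>insert j ` Pow I. c S * (\<Prod>i\<in>S. (x(j:=y)) i)) = y * pl I (\<lambda>S. c (insert j S)) x"
  proof -
    have "(\<Sum>S\<in>insert j ` Pow I. c S * (\<Prod>i\<in>S. (x(j:=y)) i))
        = (\<Sum>S\<in>Pow I. c (insert j S) * (\<Prod>i\<in>insert j S. (x(j:=y)) i))"
      by (simp add: sum.reindex[OF inj])
    also have "\<dots> = (\<Sum>S\<in>Pow I. y * (c (insert j S) * (\<Prod>i\<in>S. x i)))"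
    proof (rule sum.cong[OF refl])
      fix S assume S: "S \<in> Pow I"
      then have fS: "finite S" "j \<notin> S" using assms finite_subset by auto
      have "(\<Prod>i\<in>S. (x(j:=y)) i) = (\<Prod>i\<in>S. x i)" by (rule prod.cong) (use fS in auto)
      then show "c (insert j S) * (\<Prod>i\<in>insert j S. (x(j:=y)) i) = y * (c (insert j S) * (\<Prod>i\<in>S. x i))"
        using fS by (simp add: prod.insert)
    qed
    finally show ?thesis by (simp add: pl_def sum_distrib_left)
  qed
  show ?thesis unfolding pl_def[of "insert j I"] Pow_insert sum.union_disjoint[OF fin finite_imageI[OF fin] disj] A B by simp
qed

lemma one_dim:
  fixes a b \<epsilon> :: real
  assumes eps: "\<epsilon> > 0"
  shows "emeasure U {y. \<bar>y*a+b\<bar> \<le> \<epsilon>} \<le> emeasure lborel {t\<in>{0<..1}. \<bar>a\<bar>*t \<le> \<epsilon>}"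
proof (cases "\<bar>a\<bar> \<le> \<epsilon>")
  case True
  have "{t\<in>{0<..1}. \<bar>a\<bar>*t \<le> \<epsilon>} = {0<..1::real}"
  proof safe
    fix t :: real assume "t \<in> {0<..1}"
    then have "\<bar>a\<bar>*t \<le> \<bar>a\<bar>*1" by (intro mult_left_mono) auto
    then show "\<bar>a\<bar>*t \<le> \<epsilon>" using True by simp
  qed
  then have "emeasure lborel {t\<in>{0<..1}. \<bar>a\<bar>*t \<le> \<epsilon>} = 1" by simp
  then show ?thesis using prob_space.emeasure_le_1[OF U_prob, of "{y. \<bar>y*a+b\<bar> \<le> \<epsilon>}"] by (simp only:)
next
  case False
  then have a0: "\<bar>a\<bar> > 0" "a \<noteq> 0" using eps by auto
  define r where "r = \<epsilon> / \<bar>a\<bar>"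
  define m where "m = - b / a"
  have r0: "r > 0" using a0 eps by (simp add: r_def)
  have "{t\<in>{0<..1}. \<bar>a\<bar>*t \<le> \<epsilon>} = {0<..r}"
  proof -
    have r1: "r \<le> 1" using False a0 by (simp add: r_def)
    have iff: "\<And>t. \<bar>a\<bar>*t \<le> \<epsilon> \<longleftrightarrow> t \<le> r" using pos_le_divide_eq[OF a0(1)] by (auto simp: r_def mult.commute)
    show ?thesis
    proof (rule set_eqI)
      fix t show "t \<in> {t\<in>{0<..1}. \<bar>a\<bar>*t \<le> \<epsilon>} \<longleftrightarrow> t \<in> {0<..r}"
        using iff[of t] r1 by auto
    qed
  qed
  then have R: "emeasure lborel {t\<in>{0<..1}. \<bar>a\<bar>*t \<le> \<epsilon>} = ennreal r" using r0 by simp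
  have sub: "{y. \<bar>y*a+b\<bar> \<le> \<epsilon>} \<subseteq> {m - r .. m + r}"
  proof
    fix y assume "y \<in> {y. \<bar>y*a+b\<bar> \<le> \<epsilon>}"
    moreover have "a*(y-m) = y*a+b" using a0 by (simp add: m_def algebra_simps)
    ultimately have "\<bar>a\<bar> * \<bar>y - m\<bar> \<le> \<epsilon>"
      by (metis abs_mult mem_Collect_eq)
    then have "\<bar>y - m\<bar> \<le> r" using pos_le_divide_eq[OF a0(1)] by (auto simp: r_def mult.commute)
    then show "y \<in> {m - r .. m + r}" by auto
  qed
  have Bs: "{y. \<bar>y*a+b\<bar> \<le> \<epsilon>} \<in> sets borel" by measurable
  have "emeasure U {y. \<bar>y*a+b\<bar> \<le> \<epsilon>} = emeasure lborel ({-1..1} \<inter> {y. \<bar>y*a+b\<bar> \<le> \<epsilon>}) / emeasure lborel {-1..1::real}"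
    using Bs by (subst emeasure_uniform_measure) auto
  also have "\<dots> = emeasure lborel ({-1..1} \<inter> {y. \<bar>y*a+b\<bar> \<le> \<epsilon>}) / 2" by simp
  also have "\<dots> \<le> emeasure lborel {m - r .. m + r} / 2"
    by (intro divide_right_mono_ennreal emeasure_mono) (use sub in auto)
  also have "\<dots> = ennreal (2*r) / 2" using r0 by simp
  also have "\<dots> = ennreal r"
    using divide_ennreal[of "2*r" 2] r0 by (simp add: ennreal_numeral[symmetric] del: ennreal_numeral)
  finally show ?thesis using R by simp
qed

lemma pl_const:
  assumes "finite I" "\<forall>S\<subseteq>I. 0 < card S \<longrightarrow> c S = 0"
  shows "pl I c x = c {}"
proof -
  have "pl I c x = (\<Sum>S\<in>{{}}. c S * (\<Prod>i\<in>S. x i))"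
    unfolding pl_def
  proof (rule sum.mono_neutral_right)
    show "\<forall>i\<in>Pow I - {{}}. c i * (\<Prod>i\<in>i. x i) = 0"
      using assms by (auto simp: card_gt_0_iff dest: finite_subset)
  qed (use assms in auto)
  then show ?thesis by simp
qed

lemma ennreal_sqrt_ge: "1 \<le> \<epsilon> \<Longrightarrow> (1::ennreal) \<le> ennreal (sqrt \<epsilon>)"
  by simp

lemma base_case:
  assumes fin: "finite I" and deg: "\<forall>S\<subseteq>I. 0 < card S \<longrightarrow> c S = 0"
    and top: "\<exists>S\<subseteq>I. card S = 0 \<and> \<bar>c S\<bar> \<ge> 1" and eps: "\<epsilon> > 0"
  shows "emeasure (PiM I (\<lambda>_. U)) {x\<in>space (PiM I (\<lambda>_. U)). \<bar>pl I c x\<bar> \<le> \<epsilon>} \<le> ennreal (2^0 * sqrt \<epsilon>)"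
proof -
  from top obtain S where S: "S \<subseteq> I" "card S = 0" "\<bar>c S\<bar> \<ge> 1" by blast
  then have "S = {}" using fin finite_subset card_0_eq by metis
  with S have c0: "\<bar>c {}\<bar> \<ge> 1" by simp
  have pc: "\<And>x. pl I c x = c {}" using pl_const[OF fin deg] .
  show ?thesis
  proof (cases "\<epsilon> < 1")
    case True
    then have "{x\<in>space (PiM I (\<lambda>_. U)). \<bar>pl I c x\<bar> \<le> \<epsilon>} = {}" using c0 pc by auto
    then show ?thesis by (simp only: emeasure_empty) simp
  next
    case False
    have "emeasure (PiM I (\<lambda>_. U)) {x\<in>space (PiM I (\<lambda>_. U)). \<bar>pl I c x\<bar> \<le> \<epsilon>} \<le> 1"
      by (rule prob_space.emeasure_le_1[OF PiU_prob])
    also have "\<dots> \<le> ennreal (2^0 * sqrt \<epsilon>)" using False by simp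
    finally show ?thesis .
  qed
qed

lemma sqrt_int: "(\<integral>\<^sup>+ t. ennreal (t powr (-1/2)) * indicator {0..1::real} t \<partial>lborel) = 2"
proof -
  have "((\<lambda>t::real. t powr (-1/2)) has_integral (1 powr (-1/2+1) / (-1/2+1))) {0..1}"
    by (rule has_integral_powr_from_0) auto
  then have "((\<lambda>t::real. t powr (-1/2)) has_integral 2) {0..1}" by simp
  from nn_integral_has_integral_lebesgue'[OF _ this] show ?thesis by simp
qed

lemma step_case:
  fixes \<epsilon> B :: real
  assumes fin: "finite I" "j \<notin> I"
   and IH: "\<And>\<delta>. \<delta> > 0 \<Longrightarrow> emeasure (PiM I (\<lambda>_. U)) {x\<in>space (PiM I (\<lambda>_. U)). \<bar>pl I (\<lambda>S. c (insert j S)) x\<bar> \<le> \<delta>} \<le> ennreal (B * sqrt \<delta>)"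
   and B0: "B \<ge> 0" and eps: "\<epsilon> > 0"
  shows "emeasure (PiM (insert j I) (\<lambda>_. U)) {x\<in>space (PiM (insert j I) (\<lambda>_. U)). \<bar>pl (insert j I) c x\<bar> \<le> \<epsilon>} \<le> ennreal (2 * B * sqrt \<epsilon>)"
proof -
  interpret P: product_prob_space "\<lambda>_. U" "insert j I" by (rule U_pps)
  let ?M = "PiM I (\<lambda>_. U)"
  let ?N = "PiM (insert j I) (\<lambda>_. U)"
  define h where "h = pl I (\<lambda>S. c (insert j S))"
  define k where "k = pl I c"
  have hm[measurable]: "h \<in> borel_measurable ?M" unfolding h_def using fin by (intro pl_meas) auto
  have km[measurable]: "k \<in> borel_measurable ?M" unfolding k_def using fin by (intro pl_meas) auto
  have gm[measurable]: "pl (insert j I) c \<in> borel_measurable ?N" using fin by (intro pl_meas) auto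
  define A where "A = {x\<in>space ?N. \<bar>pl (insert j I) c x\<bar> \<le> \<epsilon>}"
  have As[measurable]: "A \<in> sets ?N" unfolding A_def by measurable
  define f where "f = (\<lambda>x t. if 0 < t \<and> t \<le> 1 \<and> \<bar>h x\<bar> * t \<le> \<epsilon> then 1 else (0::ennreal))"
  have fm: "case_prod f \<in> borel_measurable (?M \<Otimes>\<^sub>M lborel)" unfolding f_def by measurable
  interpret PS: pair_sigma_finite ?M lborel
    unfolding pair_sigma_finite_def
    using prob_space_imp_sigma_finite[OF PiU_prob] lborel.sigma_finite_measure_axioms by blast
  have "emeasure ?N A = (\<integral>\<^sup>+ x. indicator A x \<partial>?N)" using As by simp
  also have "\<dots> = (\<integral>\<^sup>+ x. (\<integral>\<^sup>+ y. indicator A (x(j := y)) \<partial>U) \<partial>?M)"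
    by (rule P.product_nn_integral_insert) (use fin in auto)
  also have "\<dots> \<le> (\<integral>\<^sup>+ x. (\<integral>\<^sup>+ t. f x t \<partial>lborel) \<partial>?M)"
  proof (rule nn_integral_mono)
    fix x assume x: "x \<in> space ?M"
    have "(\<integral>\<^sup>+ y. indicator A (x(j := y)) \<partial>U) = (\<integral>\<^sup>+ y. indicator {y. \<bar>y * h x + k x\<bar> \<le> \<epsilon>} y \<partial>U)"
    proof (rule nn_integral_cong)
      fix y
      have "x(j:=y) \<in> space ?N" using x by (auto simp: space_PiM PiE_def extensional_def)
      then show "indicator A (x(j := y)) = (indicator {y. \<bar>y * h x + k x\<bar> \<le> \<epsilon>} y :: ennreal)"
        unfolding A_def h_def k_def using pl_insert[OF fin, of c x y] by (simp add: indicator_def)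
    qed
    also have "\<dots> = emeasure U {y. \<bar>y * h x + k x\<bar> \<le> \<epsilon>}"
      by (rule nn_integral_indicator) measurable
    also have "\<dots> \<le> emeasure lborel {t\<in>{0<..1}. \<bar>h x\<bar>*t \<le> \<epsilon>}" by (rule one_dim[OF eps])
    also have "\<dots> = (\<integral>\<^sup>+ t. f x t \<partial>lborel)"
    proof -
      have "(\<integral>\<^sup>+ t. f x t \<partial>lborel) = (\<integral>\<^sup>+ t. indicator {t\<in>{0<..1}. \<bar>h x\<bar>*t \<le> \<epsilon>} t \<partial>lborel)"
        by (rule nn_integral_cong) (auto simp: f_def indicator_def)
      also have "\<dots> = emeasure lborel {t\<in>{0<..1}. \<bar>h x\<bar>*t \<le> \<epsilon>}"
        by (rule nn_integral_indicator) measurable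
      finally show ?thesis by simp
    qed
    finally show "(\<integral>\<^sup>+ y. indicator A (x(j := y)) \<partial>U) \<le> (\<integral>\<^sup>+ t. f x t \<partial>lborel)" .
  qed
  also have "\<dots> = (\<integral>\<^sup>+ t. (\<integral>\<^sup>+ x. f x t \<partial>?M) \<partial>lborel)"
    using PS.Fubini'[OF fm] by simp
  also have "\<dots> \<le> (\<integral>\<^sup>+ t. ennreal (B * sqrt \<epsilon>) * (ennreal (t powr (-1/2)) * indicator {0..1::real} t) \<partial>lborel)"
  proof (rule nn_integral_mono)
    fix t :: real
    show "(\<integral>\<^sup>+ x. f x t \<partial>?M) \<le> ennreal (B * sqrt \<epsilon>) * (ennreal (t powr (-1/2)) * indicator {0..1::real} t)"
    proof (cases "0 < t \<and> t \<le> 1")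
      case False
      then have "\<And>x. f x t = 0" by (auto simp: f_def)
      then show ?thesis by simp
    next
      case True
      have "(\<integral>\<^sup>+ x. f x t \<partial>?M) = (\<integral>\<^sup>+ x. indicator {x\<in>space ?M. \<bar>h x\<bar> \<le> \<epsilon> / t} x \<partial>?M)"
      proof (rule nn_integral_cong)
        fix x assume "x \<in> space ?M"
        moreover have "\<bar>h x\<bar> * t \<le> \<epsilon> \<longleftrightarrow> \<bar>h x\<bar> \<le> \<epsilon> / t" using True by (simp add: pos_le_divide_eq)
        ultimately show "f x t = indicator {x\<in>space ?M. \<bar>h x\<bar> \<le> \<epsilon> / t} x"
          using True by (simp add: f_def indicator_def)
      qed
      also have "\<dots> = emeasure ?M {x\<in>space ?M. \<bar>h x\<bar> \<le> \<epsilon> / t}"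
        by (rule nn_integral_indicator) measurable
      also have "\<dots> \<le> ennreal (B * sqrt (\<epsilon> / t))"
        using IH[of "\<epsilon> / t"] True eps unfolding h_def by simp
      also have "B * sqrt (\<epsilon> / t) = B * sqrt \<epsilon> * t powr (-1/2)"
        using True by (simp add: real_sqrt_divide powr_minus powr_half_sqrt divide_simps)
      finally show ?thesis using True B0 eps by (simp add: ennreal_mult)
    qed
  qed
  also have "\<dots> = ennreal (B * sqrt \<epsilon>) * 2"
    using sqrt_int by (simp add: nn_integral_cmult)
  also have "\<dots> = ennreal (2 * B * sqrt \<epsilon>)"
    using B0 eps by (simp add: ennreal_mult mult_ac)
  finally show ?thesis unfolding A_def .
qed

lemma main_bound:
  "finite I \<Longrightarrow> (\<forall>S\<subseteq>I. d < card S \<longrightarrow> c S = 0) \<Longrightarrow> (\<exists>S\<subseteq>I. card S = d \<and> \<bar>c S\<bar> \<ge> 1) \<Longrightarrow> \<epsilon> > 0 \<Longrightarrow>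
   emeasure (PiM I (\<lambda>_. U)) {x\<in>space (PiM I (\<lambda>_. U)). \<bar>pl I c x\<bar> \<le> \<epsilon>} \<le> ennreal (2^d * sqrt \<epsilon>)"
proof (induction d arbitrary: I c \<epsilon>)
  case 0
  then show ?case using base_case[of I c \<epsilon>] by simp
next
  case (Suc d)
  from Suc.prems(3) obtain S0 where S0: "S0 \<subseteq> I" "card S0 = Suc d" "\<bar>c S0\<bar> \<ge> 1" by blast
  then obtain j where j: "j \<in> S0" by fastforce
  define I' where "I' = I - {j}"
  have I: "I = insert j I'" "j \<notin> I'" "finite I'" using j S0 Suc.prems(1) by (auto simp: I'_def)
  have S0f: "finite S0" using S0 Suc.prems(1) finite_subset by blast
  have IH: "\<And>\<delta>. \<delta> > 0 \<Longrightarrow> emeasure (PiM I' (\<lambda>_. U)) {x\<in>space (PiM I' (\<lambda>_. U)). \<bar>pl I' (\<lambda>S. c (insert j S)) x\<bar> \<le> \<delta>} \<le> ennreal (2^d * sqrt \<delta>)"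
  proof (rule Suc.IH)
    show "finite I'" by fact
    show "\<forall>S\<subseteq>I'. d < card S \<longrightarrow> c (insert j S) = 0"
    proof safe
      fix S assume S: "S \<subseteq> I'" "d < card S"
      then have "finite S" using I finite_subset by blast
      then have "card (insert j S) = Suc (card S)" using S I by (metis card_insert_disjoint subsetD)
      moreover have "insert j S \<subseteq> I" using S I by auto
      ultimately show "c (insert j S) = 0" using Suc.prems(2) S by simp
    qed
    show "\<exists>S\<subseteq>I'. card S = d \<and> 1 \<le> \<bar>c (insert j S)\<bar>"
    proof (intro exI conjI)
      show "S0 - {j} \<subseteq> I'" using S0 by (auto simp: I'_def)
      show "card (S0 - {j}) = d" using S0 j S0f by simp
      show "1 \<le> \<bar>c (insert j (S0 - {j}))\<bar>" using S0 j by (simp add: insert_absorb)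
    qed
  qed
  have "emeasure (PiM (insert j I') (\<lambda>_. U)) {x\<in>space (PiM (insert j I') (\<lambda>_. U)). \<bar>pl (insert j I') c x\<bar> \<le> \<epsilon>} \<le> ennreal (2 * 2^d * sqrt \<epsilon>)"
    by (rule step_case[OF I(3) I(2) IH]) (use Suc.prems in auto)
  then show ?case using I(1) by simp
qed

theorem lemma2:
  fixes n d :: nat and c :: "nat set \<Rightarrow> real" and \<epsilon> :: real
  assumes deg: "\<forall>S\<subseteq>{1..n}. d < card S \<longrightarrow> c S = 0"
    and top: "\<exists>S\<subseteq>{1..n}. card S = d \<and> \<bar>c S\<bar> \<ge> 1"
    and eps: "\<epsilon> > 0"
  shows "measure (cube_measure n) {x \<in> space (cube_measure n). \<bar>mlpoly n c x\<bar> \<le> \<epsilon>}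
           \<le> 2 ^ d * sqrt \<epsilon>"
proof -
  have cm: "cube_measure n = PiM {1..n} (\<lambda>_. U)" by (simp add: cube_measure_def)
  interpret P: prob_space "PiM {1..n} (\<lambda>_. U)" by (rule PiU_prob)
  have ml: "mlpoly n c = pl {1..n} c" by (simp add: fun_eq_iff mlpoly_def pl_def)
  have E: "emeasure (PiM {1..n} (\<lambda>_. U)) {x\<in>space (PiM {1..n} (\<lambda>_. U)). \<bar>pl {1..n} c x\<bar> \<le> \<epsilon>} \<le> ennreal (2^d * sqrt \<epsilon>)"
    by (rule main_bound) (use assms in auto)
  have "ennreal (measure (PiM {1..n} (\<lambda>_. U)) {x\<in>space (PiM {1..n} (\<lambda>_. U)). \<bar>pl {1..n} c x\<bar> \<le> \<epsilon>}) \<le> ennreal (2^d * sqrt \<epsilon>)"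
    using E P.emeasure_eq_measure by metis
  then show ?thesis unfolding cm ml using eps by (simp add: ennreal_le_iff)
qed

end
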